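(* Let $\lambda_1,\lambda_2>0$ and let $X\sim\mathrm{Pois}(\lambda_1)$ and $Y\sim\mathrm{Pois}(\lambda_2)$ be independent Poisson random variables. For $n\ge1$ let $p_n=\mathbb{P}(XY\ge n)$. Then \[ p_n=\sqrt{2\pi}\,n^{1/4}\exp\bigl(-\sqrt{n}\,\log n+O(\sqrt{n})\bigr),\qquad n\to\infty. \] In particular, $\log p_n=-\sqrt{n}\,\log n+O(\sqrt{n})$.
   Context: $\log$ denotes the natural logarithm. $\mathrm{Pois}(\lambda)$ is the Poisson distribution with mean $\lambda$. *)

theory Defs
  imports "HOL-Probability.Probability" "HOL-Library.Landau_Symbols"
begin

definition pois_prod_tail :: "real \<Rightarrow> real \<Rightarrow> nat \<Rightarrow> real" where
  "pois_prod_tail l1 l2 n =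
     measure_pmf.prob (pair_pmf (poisson_pmf l1) (poisson_pmf l2)) {(x, y). x * y \<ge> n}"

end

theory Submission
  imports Defs
begin

lemma pow_fact_le_exp:
  fixes x :: real assumes "x \<ge> 0"
  shows "x ^ n / fact n \<le> exp x"
proof -
  have s: "summable (\<lambda>n. x^n /\<^sub>R fact n)" using exp_converges sums_summable by blast
  have "sum (\<lambda>n. x^n /\<^sub>R fact n) {n} \<le> suminf (\<lambda>n. x^n /\<^sub>R fact n)"
    by (rule sum_le_suminf[OF s]) (use assms in auto)
  also have "\<dots> = exp x" using exp_converges sums_unique by metis
  finally show ?thesis by (simp add: divide_inverse_commute)
qed

lemma ln_fact_lower:
  assumes "n \<ge> 1"
  shows "real n * ln (real n) - real n \<le> ln (fact n)"
proof -
  have "real n ^ n / fact n \<le> exp (real n)" by (rule pow_fact_le_exp) auto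
  hence "real n ^ n \<le> exp (real n) * fact n" by (simp add: divide_le_eq)
  hence "ln (real n ^ n) \<le> ln (exp (real n) * fact n)"
    using assms by (subst ln_le_cancel_iff) auto
  thus ?thesis using assms by (simp add: ln_mult ln_realpow)
qed

lemma ln_fact_upper:
  assumes "n \<ge> 1"
  shows "ln (fact n) \<le> real n * ln (real n)"
proof -
  have "fact n \<le> (real (n^n))" by (rule fact_le_power)
  hence "ln (fact n) \<le> ln (real n ^ n)" using assms by (subst ln_le_cancel_iff) auto
  thus ?thesis using assms by (simp add: ln_realpow)
qed

lemma xlnx:
  fixes a b :: real assumes "a > 0" "b > 0"
  shows "(a + b) / 2 * (ln a + ln b) \<le> a * ln a + b * ln b"
proof -
  have "(a - b) * (ln a - ln b) \<ge> 0"
  proof (cases "a \<le> b")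
    case True thus ?thesis using assms by (intro mult_nonpos_nonpos) auto
  next
    case False thus ?thesis using assms by (intro mult_nonneg_nonneg) auto
  qed
  thus ?thesis by (simp add: algebra_simps)
qed


lemma pointwise_upper:
  fixes l1 l2 L :: real and n x y :: nat
  assumes l: "l1 > 0" "l2 > 0" and L: "L = max l1 l2" and n: "n \<ge> 1"
    and big: "ln (2*L) + 1 \<le> ln (real n) / 2" and xy: "x * y \<ge> n"
  shows "pmf (poisson_pmf l1) x * pmf (poisson_pmf l2) y \<le>
         exp (2 * sqrt n * (ln (2*L) + 1) - sqrt n * ln n) * ((1/2)^x * (1/2)^y)"
proof -
  define a where "a = real x"
  define b where "b = real y"
  define D where "D = ln (2*L) + 1 - ln (real n) / 2"
  have x1: "x \<ge> 1" and y1: "y \<ge> 1" using xy n by (auto simp: Suc_le_eq intro: Nat.gr0I)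
  have a1: "a \<ge> 1" and b1: "b \<ge> 1" using x1 y1 by (auto simp: a_def b_def)
  have Lpos: "L > 0" using l L by auto
  have abn: "a * b \<ge> real n" using xy by (simp add: a_def b_def flip: of_nat_mult)
  have D0: "D \<le> 0" using big by (simp add: D_def)
  have sq: "(a + b)^2 \<ge> 4 * real n"
  proof -
    have "(a+b)^2 = (a-b)^2 + 4*(a*b)" by (simp add: power2_eq_square algebra_simps)
    thus ?thesis using abn by (smt (verit) zero_le_power2)
  qed
  have abs: "a + b \<ge> 2 * sqrt n"
  proof -
    have "sqrt (4 * real n) \<le> sqrt ((a+b)^2)" using sq by (rule real_sqrt_le_mono)
    thus ?thesis using a1 b1 by (simp add: real_sqrt_mult)
  qed
  have lnab: "ln a + ln b \<ge> ln n" proof -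
    have "ln (real n) \<le> ln (a * b)" using abn n by (subst ln_le_cancel_iff) auto
    thus ?thesis using a1 b1 by (simp add: ln_mult)
  qed
  have "(a + b) / 2 * ln n \<le> (a + b) / 2 * (ln a + ln b)"
    using lnab a1 b1 by (intro mult_left_mono) auto
  also have "\<dots> \<le> a * ln a + b * ln b" using xlnx a1 b1 by auto
  finally have c1: "(a + b) / 2 * ln n \<le> a * ln a + b * ln b" .
  have fx: "a * ln a - a \<le> ln (fact x)" using ln_fact_lower[OF x1] by (simp add: a_def)
  have fy: "b * ln b - b \<le> ln (fact y)" using ln_fact_lower[OF y1] by (simp add: b_def)
  have "(a + b) * D \<le> 2 * sqrt n * D" using abs D0 by (intro mult_right_mono_neg) auto
  hence key: "(a + b) * ln (2*L) \<le> (2 * sqrt n * (ln (2*L) + 1) - sqrt n * ln n) + ln (fact x) + ln (fact y)"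
    proof -
    have e1: "(a+b)*D = (a+b)*ln(2*L) + (a+b) - (a+b)*ln n/2" by (simp add: D_def algebra_simps)
    have e2: "2 * sqrt n*D = 2 * sqrt n*(ln(2*L)+1) - sqrt n * ln n" by (simp add: D_def algebra_simps)
    have c1': "(a+b)*ln n/2 \<le> a*ln a + b*ln b" using c1 by simp
    show ?thesis using e1 e2 c1' fx fy \<open>(a + b) * D \<le> 2 * sqrt n * D\<close> by linarith
  qed
  have "(2*L)^(x+y) = exp ((a+b) * ln (2*L))"
    proof -
    have "exp ((a+b)*ln(2*L)) = exp (ln (2*L)) ^ (x+y)"
      unfolding a_def b_def by (simp only: exp_of_nat_mult[symmetric] of_nat_add)
    thus ?thesis using Lpos by simp
  qed
  also have "\<dots> \<le> exp ((2 * sqrt n * (ln (2*L) + 1) - sqrt n * ln n) + ln (fact x) + ln (fact y))"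
    using key by simp
  also have "\<dots> = exp (2 * sqrt n * (ln (2*L) + 1) - sqrt n * ln n) * fact x * fact y"
    by (simp add: exp_add)
  finally have main: "(2*L)^(x+y) \<le> exp (2 * sqrt n * (ln (2*L) + 1) - sqrt n * ln n) * fact x * fact y" .
  have "pmf (poisson_pmf l1) x * pmf (poisson_pmf l2) y = l1^x / fact x * exp (-l1) * (l2^y / fact y * exp (-l2))"
    using l by simp
  also have "\<dots> \<le> L^x / fact x * 1 * (L^y / fact y * 1)"
    using l L by (intro mult_mono divide_right_mono power_mono) auto
  also have "\<dots> = (2*L)^(x+y) / (fact x * fact y) * ((1/2)^x * (1/2)^y)"
    by (simp add: power_add power_mult_distrib field_simps)
  also have "\<dots> \<le> exp (2 * sqrt n * (ln (2*L) + 1) - sqrt n * ln n) * ((1/2)^x * (1/2)^y)"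
    using main by (intro mult_right_mono) (auto simp: divide_le_eq algebra_simps)
  finally show ?thesis .
qed


lemma tail_upper:
  fixes l1 l2 L :: real and n :: nat
  assumes l: "l1 > 0" "l2 > 0" and L: "L = max l1 l2" and n: "n \<ge> 1"
    and big: "ln (2*L) + 1 \<le> ln (real n) / 2"
  shows "pois_prod_tail l1 l2 n \<le> 4 * exp (2 * sqrt n * (ln (2*L) + 1) - sqrt n * ln n)"
proof -
  define E where "E = exp (2 * sqrt n * (ln (2*L) + 1) - sqrt n * ln n)"
  define P where "P = pair_pmf (poisson_pmf l1) (poisson_pmf l2)"
  define G where "G = geometric_pmf (1/2)"
  define Q where "Q = pair_pmf G G"
  define A where "A = {(x::nat, y::nat). x * y \<ge> n}"
  have pt: "pmf P z \<le> 4 * E * pmf Q z" if "z \<in> A" for z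
  proof -
    obtain x y where z: "z = (x, y)" by (cases z)
    have "pmf P z = pmf (poisson_pmf l1) x * pmf (poisson_pmf l2) y"
      by (simp add: P_def z pmf_pair)
    also have "\<dots> \<le> E * ((1/2)^x * (1/2)^y)"
      unfolding E_def by (rule pointwise_upper[OF l L n big]) (use that in \<open>simp add: A_def z\<close>)
    also have "\<dots> = 4 * E * pmf Q z"
      by (simp add: Q_def G_def z pmf_pair)
    finally show ?thesis .
  qed
  have "pois_prod_tail l1 l2 n = infsetsum (pmf P) A"
    by (simp add: pois_prod_tail_def P_def A_def measure_pmf_conv_infsetsum)
  also have "\<dots> \<le> infsetsum (\<lambda>z. 4 * E * pmf Q z) A"
    by (rule infsetsum_mono) (use pt in auto)
  also have "\<dots> = 4 * E * infsetsum (pmf Q) A"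
    by (rule infsetsum_cmult_right) auto
  also have "\<dots> = 4 * E * measure_pmf.prob Q A"
    by (simp add: measure_pmf_conv_infsetsum)
  also have "\<dots> \<le> 4 * E * 1"
    by (intro mult_left_mono) (auto simp: E_def)
  finally show ?thesis by (simp add: E_def)
qed


lemma tail_lower:
  fixes l1 l2 :: real and n :: nat
  assumes l: "l1 > 0" "l2 > 0" and n: "n \<ge> 1"
  shows "pois_prod_tail l1 l2 n > 0 \<and>
    ln (pois_prod_tail l1 l2 n) \<ge> - sqrt n * ln n - (2 * \<bar>ln l1\<bar> + 2 * \<bar>ln l2\<bar> + l1 + l2 + 6) * sqrt n"
proof -
  define s where "s = sqrt (real n)"
  define k where "k = nat \<lceil>s\<rceil>"
  define P where "P = pair_pmf (poisson_pmf l1) (poisson_pmf l2)"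
  define A where "A = {(x::nat, y::nat). x * y \<ge> n}"
  have s1: "s \<ge> 1" using n by (simp add: s_def)
  have ks: "real k \<ge> s" "real k \<le> s + 1" using s1 by (auto simp: k_def)
  have k1: "k \<ge> 1" using ks s1 by linarith
  have "real n = s^2" using s_def by simp
  also have "\<dots> \<le> real k ^ 2" using ks s1 by (intro power_mono) auto
  finally have "n \<le> k * k" by (simp add: power2_eq_square flip: of_nat_mult)
  hence kA: "(k, k) \<in> A" by (simp add: A_def)
  have pk: "pmf P (k, k) = pmf (poisson_pmf l1) k * pmf (poisson_pmf l2) k"
    by (simp add: P_def pmf_pair)
  have pos1: "pmf (poisson_pmf l1) k > 0" "pmf (poisson_pmf l2) k > 0" using l by auto
  have "pmf P (k, k) = measure_pmf.prob P {(k, k)}" by (simp add: measure_pmf_single)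
  also have "\<dots> \<le> measure_pmf.prob P A" by (rule measure_pmf.finite_measure_mono) (use kA in auto)
  also have "\<dots> = pois_prod_tail l1 l2 n" by (simp add: pois_prod_tail_def P_def A_def)
  finally have le: "pmf P (k, k) \<le> pois_prod_tail l1 l2 n" .
  have ppos: "pmf P (k, k) > 0" using pk pos1 by simp
  have lnpmf: "ln (pmf (poisson_pmf l) k) = k * ln l - ln (fact k) - l" if "l > 0" for l
    using that by (simp add: ln_mult ln_div ln_realpow)
  have lnf: "ln (fact k) \<le> s * ln s + 3 * s"
  proof -
    have "ln (fact k) \<le> real k * ln (real k)" by (rule ln_fact_upper[OF k1])
    also have "\<dots> \<le> (s + 1) * ln (s + 1)"
      using ks k1 by (intro mult_mono) auto
    also have "ln (s + 1) \<le> ln s + 1 / s"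
    proof -
      have "s + 1 = s * (1 + 1/s)" using s1 by (simp add: field_simps)
      hence "ln (s + 1) = ln (s * (1 + 1/s))" by simp
      also have "\<dots> = ln s + ln (1 + 1/s)" using s1 by (intro ln_mult_pos) (auto simp: add_pos_pos)
      also have "ln (1 + 1/s) \<le> 1/s" using s1 by (intro ln_add_one_self_le_self) auto
      finally show ?thesis by simp
    qed
    hence "(s + 1) * ln (s + 1) \<le> (s + 1) * (ln s + 1 / s)" using s1 by (intro mult_left_mono) auto
    also have "\<dots> = s * ln s + ln s + 1 + 1 / s" using s1 by (simp add: field_simps)
    also have "\<dots> \<le> s * ln s + 3 * s"
    proof -
      have "ln s \<le> s - 1" using s1 by (intro ln_le_minus_one) auto
      moreover have "1 / s \<le> 1" using s1 by simp
      ultimately show ?thesis using s1 by linarith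
    qed
    finally show ?thesis by simp
  qed
  have lnn: "sqrt n * ln n = 2 * (s * ln s)"
  proof -
    have "ln (real n) = ln (s^2)" by (simp add: s_def)
    also have "\<dots> = 2 * ln s" using s1 by (simp add: ln_realpow)
    finally show ?thesis by (simp add: s_def)
  qed
  have kl: "real k * ln l \<ge> - (2 * s) * \<bar>ln l\<bar>" for l
  proof -
    have "real k * \<bar>ln l\<bar> \<le> (2 * s) * \<bar>ln l\<bar>" using ks s1 by (intro mult_right_mono) auto
    moreover have "real k * ln l \<ge> - (real k * \<bar>ln l\<bar>)" by (simp add: abs_if)
    ultimately show ?thesis by linarith
  qed
  have "ln (pmf P (k, k)) = ln (pmf (poisson_pmf l1) k) + ln (pmf (poisson_pmf l2) k)"
    using pk pos1 by (simp add: ln_mult)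
  also have "\<dots> = k * ln l1 - ln (fact k) - l1 + (k * ln l2 - ln (fact k) - l2)"
    using lnpmf l by simp
  finally have eq: "ln (pmf P (k, k)) = k * ln l1 - ln (fact k) - l1 + (k * ln l2 - ln (fact k) - l2)" .
  have "l1 \<le> l1 * s" "l2 \<le> l2 * s" using l s1 by auto
  moreover have "(2 * \<bar>ln l1\<bar> + 2 * \<bar>ln l2\<bar> + l1 + l2 + 6) * s =
     (2 * s) * \<bar>ln l1\<bar> + (2 * s) * \<bar>ln l2\<bar> + l1 * s + l2 * s + 6 * s"
    by (simp add: algebra_simps)
  ultimately have "ln (pmf P (k, k)) \<ge> - (2 * (s * ln s)) - (2 * \<bar>ln l1\<bar> + 2 * \<bar>ln l2\<bar> + l1 + l2 + 6) * s"
    using eq lnf kl[of l1] kl[of l2] by linarith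
  hence "ln (pmf P (k, k)) \<ge> - sqrt n * ln n - (2 * \<bar>ln l1\<bar> + 2 * \<bar>ln l2\<bar> + l1 + l2 + 6) * sqrt n"
    using lnn unfolding s_def[symmetric] by linarith
  moreover have "ln (pmf P (k, k)) \<le> ln (pois_prod_tail l1 l2 n)" using le ppos by simp
  ultimately show ?thesis using le ppos by linarith
qed


theorem theorem2:
  fixes l1 l2 :: real
  assumes "l1 > 0" and "l2 > 0"
  shows "\<exists>f :: nat \<Rightarrow> real. f \<in> O(\<lambda>n. sqrt (real n)) \<and>
           (\<forall>n\<ge>1. pois_prod_tail l1 l2 n =
              sqrt (2 * pi) * real n powr (1/4) * exp (- sqrt (real n) * ln (real n) + f n))"
proof -
  define p where "p = pois_prod_tail l1 l2"
  define c where "c = (\<lambda>n::nat. sqrt (2 * pi) * real n powr (1/4))"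
  define f where "f = (\<lambda>n. ln (p n) + sqrt (real n) * ln (real n) - ln (c n))"
  define L where "L = max l1 l2"
  define C where "C = 2 * \<bar>ln l1\<bar> + 2 * \<bar>ln l2\<bar> + l1 + l2 + 6"
  define M where "M = C + 2 + 2 * \<bar>ln (2*L) + 1\<bar> + \<bar>ln (sqrt (2 * pi))\<bar> + 1"
  have cpos: "c n > 0" if "n \<ge> 1" for n using that by (simp add: c_def)
  have eq: "\<forall>n\<ge>1. p n = c n * exp (- sqrt (real n) * ln (real n) + f n)"
  proof (intro allI impI)
    fix n :: nat assume n: "n \<ge> 1"
    have pp: "p n > 0" using tail_lower[OF assms n] by (simp add: p_def)
    have "exp (- sqrt (real n) * ln (real n) + f n) = exp (ln (p n) - ln (c n))"
      by (simp add: f_def)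
    also have "\<dots> = p n / c n" using pp cpos[OF n] by (simp add: exp_diff)
    finally show "p n = c n * exp (- sqrt (real n) * ln (real n) + f n)" using cpos[OF n] by simp
  qed
  have ev1: "eventually (\<lambda>n::nat. ln (real n) \<ge> 2 * (ln (2*L) + 1)) at_top"
    using filterlim_compose[OF ln_at_top filterlim_real_sequentially]
    by (simp add: filterlim_at_top)
  have ev2: "eventually (\<lambda>n::nat. n \<ge> 1) at_top" by (rule eventually_ge_at_top)
  have "eventually (\<lambda>n. norm (f n) \<le> M * norm (sqrt (real n))) at_top"
    using ev1 ev2
  proof eventually_elim
    case (elim n)
    hence n: "n \<ge> 1" and big: "ln (2*L) + 1 \<le> ln (real n) / 2" by auto
    define s where "s = sqrt (real n)"
    have s1: "s \<ge> 1" using n by (simp add: s_def)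
    have lo: "ln (p n) \<ge> - s * ln n - C * s"
      using tail_lower[OF assms n] by (simp add: p_def C_def s_def)
    have pp: "p n > 0" using tail_lower[OF assms n] by (simp add: p_def)
    have up0: "p n \<le> 4 * exp (2 * s * (ln (2*L) + 1) - s * ln n)"
      using tail_upper[OF assms L_def n big] by (simp add: p_def s_def)
    have "ln (p n) \<le> ln (4 * exp (2 * s * (ln (2*L) + 1) - s * ln n))"
      using up0 pp by (subst ln_le_cancel_iff) auto
    also have "\<dots> = ln 4 + (2 * s * (ln (2*L) + 1) - s * ln n)" by (simp add: ln_mult)
    finally have up: "ln (p n) \<le> ln 4 + (2 * s * (ln (2*L) + 1) - s * ln n)" .
    have ln4: "ln (4::real) \<le> 2 * s"
    proof -
      have "ln (4::real) \<le> 4 - 1" by (rule ln_le_minus_one) auto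
      hence "ln (4::real) \<le> 3" by simp
      moreover have "ln (4::real) \<le> 2"
      proof -
        have "ln (4::real) = 2 * ln 2" using ln_realpow[of 2 2] by simp
        moreover have "ln (2::real) \<le> 1" using ln_le_minus_one[of 2] by simp
        ultimately show ?thesis by simp
      qed
      ultimately show ?thesis using s1 by linarith
    qed
    have t1: "2 * s * (ln (2*L) + 1) \<le> 2 * s * \<bar>ln (2*L) + 1\<bar>" using s1 by (intro mult_left_mono) auto
    have lnn: "ln (real n) = 2 * ln s"
    proof -
      have "ln (real n) = ln (s^2)" by (simp add: s_def)
      also have "\<dots> = 2 * ln s" using s1 by (simp add: ln_realpow)
      finally show ?thesis .
    qed
    have lns: "ln s \<le> s" using s1 ln_le_minus_one[of s] by auto
    have lnc: "ln (c n) = ln (sqrt (2 * pi)) + ln (real n) / 4"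
      using n by (simp add: c_def ln_mult ln_powr)
    have lnc0: "ln (sqrt (2 * pi)) \<ge> 0" using pi_gt3 by simp
    have lnc1: "ln (sqrt (2 * pi)) \<le> \<bar>ln (sqrt (2 * pi))\<bar> * s" using s1 lnc0 mult_left_mono[of 1 s "ln (sqrt (2 * pi))"] by simp
    have lnn0: "ln (real n) \<ge> 0" using n by simp
    have fn: "f n = ln (p n) + s * ln n - ln (c n)" by (simp add: f_def s_def)
    have "\<bar>f n\<bar> \<le> M * s"
    proof -
      have Ms: "M * s = C * s + 2 * s + 2 * s * \<bar>ln (2*L) + 1\<bar> + \<bar>ln (sqrt (2 * pi))\<bar> * s + s"
        by (simp add: M_def algebra_simps)
      have C0: "C * s \<ge> 0" using s1 assms by (simp add: C_def)
      have a0: "2 * s * \<bar>ln (2*L) + 1\<bar> \<ge> 0" using s1 by simp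
      have b0: "\<bar>ln (sqrt (2 * pi))\<bar> * s \<ge> 0" using s1 by simp
      have u: "f n \<le> M * s" using fn up ln4 t1 lnc lnc0 lnn0 Ms C0 b0 s1 by linarith
      have l: "- (M * s) \<le> f n" using fn lo lnc lnc1 lnn lns Ms a0 s1 by linarith
      show ?thesis using u l by linarith
    qed
    thus ?case by (simp add: s_def)
  qed
  hence "f \<in> O(\<lambda>n. sqrt (real n))" by (rule bigoI)
  thus ?thesis using eq unfolding p_def c_def by blast
qed

end
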